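(* Let $A\in\mathbb R^{N\times N}$ be a non-singular $M$-matrix and let $p<1$. If $x\in\mathbb R^N$ with $x>0$ satisfies $Ax\le x^p$ and $y\in\mathbb R^N$ with $y>0$ satisfies $Ay\ge y^p$, then $x\le y$. In particular, the equation $Ax=x^p$ has a unique solution $x\in\mathbb R^N$ with $x>0$.
   Context: Inequalities between vectors/matrices are componentwise; for $x\in(0,\infty)^N$, $x^p:=(x_1^p,\dots,x_N^p)^\top$. A matrix $A\in\mathbb R^{N\times N}$ is a $Z$-matrix if $A_{ij}\le 0$ for all $i\neq j$. A $Z$-matrix $A$ is an $M$-matrix if $A=s\,\mathrm{Id}-B$ for some matrix $B\ge 0$ and some $s\in\mathbb R$ with $s\ge\rho(B)$ ($\rho(B)$ the spectral radius); it is a non-singular $M$-matrix if in addition it is invertible. *)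

theory Defs
  imports "HOL-Analysis.Analysis"
begin

definition spectral_radius :: "real^'n^'n \<Rightarrow> real" where
  "spectral_radius B = Sup {norm \<mu> | \<mu>::complex. \<exists>v::complex^'n. v \<noteq> 0 \<and>
       (\<chi> i j. complex_of_real (B $ i $ j)) *v v = \<mu> *s v}"

definition Z_matrix :: "real^'n^'n \<Rightarrow> bool" where
  "Z_matrix A \<longleftrightarrow> (\<forall>i j. i \<noteq> j \<longrightarrow> A $ i $ j \<le> 0)"

definition M_matrix :: "real^'n^'n \<Rightarrow> bool" where
  "M_matrix A \<longleftrightarrow> Z_matrix A \<and>
     (\<exists>s::real. \<exists>B::real^'n^'n. (\<forall>i j. B $ i $ j \<ge> 0) \<and>
        A = s *\<^sub>R mat 1 - B \<and> s \<ge> spectral_radius B)"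

definition nonsingular_M_matrix :: "real^'n^'n \<Rightarrow> bool" where
  "nonsingular_M_matrix A \<longleftrightarrow> M_matrix A \<and> invertible A"

end

theory Submission
  imports Defs
begin

lemma Mt_apply: "((t *\<^sub>R mat 1 - B) *v v) $ i = t * v$i - (B *v v)$i"
  for B :: "real^'n^'n"
  by (simp add: matrix_vector_mult_diff_rdistrib flip: scaleR_matrix_vector_assoc)

lemma Mt_offdiag: "i \<noteq> j \<Longrightarrow> (t *\<^sub>R mat 1 - B) $ i $ j = - (B $ i $ j)"
  for B :: "real^'n^'n"
  by (simp add: mat_def)

lemma Z_row_le:
  fixes M :: "real^'n^'n"
  assumes "\<forall>i j. i \<noteq> j \<longrightarrow> M$i$j \<le> 0" "\<forall>j. j \<noteq> k \<longrightarrow> w$j \<ge> 0"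
  shows "(M *v w)$k \<le> M$k$k * w$k"
proof -
  have "(M *v w)$k = (\<Sum>j\<in>UNIV. M$k$j * w$j)" by (simp add: matrix_vector_mult_def)
  also have "\<dots> = M$k$k * w$k + (\<Sum>j\<in>UNIV-{k}. M$k$j * w$j)"
    by (simp add: sum.remove)
  also have "(\<Sum>j\<in>UNIV-{k}. M$k$j * w$j) \<le> 0"
  proof (rule sum_nonpos)
    fix j assume "j \<in> UNIV-{k}"
    thus "M$k$j * w$j \<le> 0" using assms by (auto intro: mult_nonpos_nonneg)
  qed
  finally show ?thesis by simp
qed

lemma Z_row_nonpos:
  fixes M :: "real^'n^'n"
  assumes "\<forall>i j. i \<noteq> j \<longrightarrow> M$i$j \<le> 0" "\<forall>j. w$j \<ge> 0" "w$k = 0"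
  shows "(M *v w)$k \<le> 0"
  using Z_row_le[of M k w] assms by simp

lemma inv_ker: "invertible (A::real^'n^'n) \<Longrightarrow> A *v v = 0 \<Longrightarrow> v = 0"
  by (metis invertible_left_inverse matrix_left_invertible_ker)

lemma ker_right_inv:
  fixes M :: "real^'n^'n"
  assumes "\<forall>v. M *v v = 0 \<longrightarrow> v = 0"
  obtains N where "\<forall>y. M *v (N *v y) = y"
  by (metis assms matrix_left_invertible_ker matrix_left_right_inverse matrix_vector_mul_assoc matrix_vector_mul_lid)

lemma eig_bound:
  fixes B :: "real^'n^'n" and w :: "complex^'n"
  assumes "w \<noteq> 0" "(\<chi> i j. complex_of_real (B$i$j)) *v w = \<mu> *s w"
  shows "norm \<mu> \<le> (\<Sum>i\<in>UNIV. \<Sum>j\<in>UNIV. \<bar>B$i$j\<bar>)"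
proof -
  let ?Bc = "(\<chi> i j. complex_of_real (B$i$j))"
  let ?S = "range (\<lambda>j. norm (w$j))"
  have fin: "finite ?S" by simp
  have "Max ?S \<in> ?S" using fin by (intro Max_in) auto
  then obtain k where k: "norm (w$k) = Max ?S" by (metis (no_types, lifting) imageE)
  have kmax: "norm (w$j) \<le> norm (w$k)" for j using k fin by simp
  obtain j0 where "w$j0 \<noteq> 0" using assms(1) by (metis vec_eq_iff zero_index)
  hence wk: "norm (w$k) > 0" using kmax[of j0] by (meson less_le_trans zero_less_norm_iff)
  have "\<mu> * w$k = (\<Sum>j\<in>UNIV. complex_of_real (B$k$j) * w$j)"
    using arg_cong[OF assms(2), of "\<lambda>v. v$k"] by (simp add: matrix_vector_mult_def)
  hence "norm \<mu> * norm (w$k) = norm (\<Sum>j\<in>UNIV. complex_of_real (B$k$j) * w$j)"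
    by (metis norm_mult)
  also have "\<dots> \<le> (\<Sum>j\<in>UNIV. \<bar>B$k$j\<bar> * norm (w$j))"
    by (rule order_trans[OF norm_sum]) (simp add: norm_mult)
  also have "\<dots> \<le> (\<Sum>j\<in>UNIV. \<bar>B$k$j\<bar> * norm (w$k))"
    by (intro sum_mono mult_left_mono kmax) auto
  also have "\<dots> = (\<Sum>j\<in>UNIV. \<bar>B$k$j\<bar>) * norm (w$k)"
    by (simp add: sum_distrib_right)
  finally have "norm \<mu> \<le> (\<Sum>j\<in>UNIV. \<bar>B$k$j\<bar>)" using wk by simp
  also have "\<dots> \<le> (\<Sum>i\<in>UNIV. \<Sum>j\<in>UNIV. \<bar>B$i$j\<bar>)"
    by (rule member_le_sum[where f = "\<lambda>i. \<Sum>j\<in>UNIV. \<bar>B$i$j\<bar>"]) (auto intro: sum_nonneg)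
  finally show ?thesis .
qed

lemma real_eig_le_sr:
  fixes B :: "real^'n^'n"
  assumes "v \<noteq> 0" "B *v v = r *\<^sub>R v"
  shows "\<bar>r\<bar> \<le> spectral_radius B"
proof -
  let ?Bc = "(\<chi> i j. complex_of_real (B$i$j))"
  define vc where "vc = (\<chi> i. complex_of_real (v$i))"
  have "vc \<noteq> 0" using assms(1) by (auto simp: vc_def vec_eq_iff)
  moreover have "?Bc *v vc = complex_of_real r *s vc"
  proof -
    have "(?Bc *v vc)$i = (complex_of_real r *s vc)$i" for i
    proof -
      have "(?Bc *v vc)$i = complex_of_real ((B *v v)$i)"
        by (simp add: matrix_vector_mult_def vc_def)
      also have "\<dots> = complex_of_real (r * v$i)" using assms(2) by simp
      finally show ?thesis by (simp add: vc_def)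
    qed
    thus ?thesis by (simp add: vec_eq_iff)
  qed
  ultimately have mem: "\<bar>r\<bar> \<in> {norm \<mu> | \<mu>::complex. \<exists>v::complex^'n. v \<noteq> 0 \<and> ?Bc *v v = \<mu> *s v}"
    by (metis (mono_tags, lifting) mem_Collect_eq norm_of_real)
  have bdd: "bdd_above {norm \<mu> | \<mu>::complex. \<exists>v::complex^'n. v \<noteq> 0 \<and> ?Bc *v v = \<mu> *s v}"
    unfolding bdd_above_def using eig_bound[of _ B] by blast
  show ?thesis unfolding spectral_radius_def by (rule cSup_upper[OF mem bdd])
qed

lemma Z_monotone:
  fixes M :: "real^'n^'n"
  assumes Z: "\<forall>i j. i \<noteq> j \<longrightarrow> M$i$j \<le> 0" and u: "\<forall>i. u$i > 0" "\<forall>i. (M *v u)$i > 0"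
    and y: "\<forall>i. (M *v y)$i \<ge> 0"
  shows "y$i \<ge> 0"
proof (rule ccontr)
  assume neg: "\<not> y$i \<ge> 0"
  let ?S = "range (\<lambda>j. - y$j / u$j)"
  define l where "l = Max ?S"
  have fin: "finite ?S" by simp
  have ge: "- y$j / u$j \<le> l" for j unfolding l_def using fin by simp
  have "Max ?S \<in> ?S" using fin by (intro Max_in) auto
  then obtain k where k: "l = - y$k / u$k" unfolding l_def by (metis (no_types, lifting) imageE)
  have "- y$i / u$i > 0" using neg u(1)[rule_format, of i] by (simp add: divide_neg_pos)
  hence lpos: "l > 0" using ge[of i] by linarith
  define w where "w = y + l *\<^sub>R u"
  have w0: "w$j \<ge> 0" for j
  proof -
    have "- y$j \<le> l * u$j" using ge[of j] u(1)[rule_format, of j] by (metis minus_divide_left pos_divide_le_eq)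
    thus ?thesis by (simp add: w_def)
  qed
  have wk: "w$k = 0" using k u(1)[rule_format, of k] by (simp add: w_def field_simps)
  have "(M *v w)$k \<le> 0" using Z_row_nonpos[OF Z] w0 wk by blast
  moreover have "(M *v w)$k = (M *v y)$k + l * (M *v u)$k"
    by (simp add: w_def matrix_vector_right_distrib matrix_scaleR_vector_ac flip: scaleR_matrix_vector_assoc)
  moreover have "l * (M *v u)$k > 0" using lpos u(2) by simp
  ultimately show False using y by (smt (verit))
qed
lemma Mmat_pos_vec:
  fixes B :: "real^'n^'n"
  assumes B0: "\<forall>i j. B$i$j \<ge> 0" and sr: "s \<ge> spectral_radius B"
    and inv: "invertible (s *\<^sub>R mat 1 - B)"
  shows "\<exists>u. (\<forall>i. u$i > 0) \<and> (\<forall>i. ((s *\<^sub>R mat 1 - B) *v u)$i > 0)"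
proof -
  define T where "T = {t. \<exists>u. (\<forall>i. u$i > (0::real)) \<and> (\<forall>i. ((t *\<^sub>R mat 1 - B) *v u)$i > 0)}"
  have Zt: "\<forall>i j. i \<noteq> j \<longrightarrow> (t *\<^sub>R mat 1 - B)$i$j \<le> 0" for t
    using B0 by (auto simp: mat_def)
  have Bv_nonneg: "(B *v v)$i \<ge> 0" if "\<forall>j. v$j \<ge> 0" for v i
    using B0 that by (simp add: matrix_vector_mult_def sum_nonneg)
  have up: "t' \<in> T" if tT: "t \<in> T" and tle: "t \<le> t'" for t t'
  proof -
    obtain u where u: "\<forall>i. u$i > 0" "\<forall>i. ((t *\<^sub>R mat 1 - B) *v u)$i > 0"
      using tT unfolding T_def by blast
    have "((t' *\<^sub>R mat 1 - B) *v u)$i > 0" for i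
    proof -
      have "t * u$i \<le> t' * u$i" using u(1) tle by (simp add: mult_right_mono less_imp_le)
      thus ?thesis using u(2)[rule_format, of i] by (simp add: Mt_apply)
    qed
    thus ?thesis using u(1) unfolding T_def by blast
  qed
  define R where "R = (\<Sum>i\<in>UNIV. \<Sum>j\<in>UNIV. B$i$j)"
  have "R + 1 \<in> T"
  proof -
    have "(((R + 1) *\<^sub>R mat 1 - B) *v (\<chi> j. 1)) $ i > 0" for i
    proof -
      have "(B *v (\<chi> j. 1))$i = (\<Sum>j\<in>UNIV. B$i$j)" by (simp add: matrix_vector_mult_def)
      also have "\<dots> \<le> R" unfolding R_def
        by (rule member_le_sum[where f = "\<lambda>i. \<Sum>j\<in>UNIV. B$i$j"]) (use B0 in \<open>auto intro: sum_nonneg\<close>)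
      finally show ?thesis by (simp add: Mt_apply)
    qed
    thus ?thesis unfolding T_def by (intro CollectI exI[of _ "\<chi> j. 1"]) auto
  qed
  hence Tne: "T \<noteq> {}" by auto
  have Tpos: "t > 0" if tT: "t \<in> T" for t
  proof -
    obtain u where u: "\<forall>i. u$i > 0" "\<forall>i. ((t *\<^sub>R mat 1 - B) *v u)$i > 0"
      using tT unfolding T_def by blast
    have "t * u$undefined > (B *v u)$undefined" using u(2) by (simp add: Mt_apply)
    moreover have "(B *v u)$undefined \<ge> 0" using u(1) Bv_nonneg by (simp add: less_imp_le)
    ultimately show ?thesis using u(1) by (meson le_less_trans zero_less_mult_pos2)
  qed
  hence Tbdd: "bdd_below T" by (meson bdd_below.I less_imp_le)
  have opn: "\<exists>d>0. t - d \<in> T" if tT: "t \<in> T" for t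
  proof -
    obtain u where u: "\<forall>i. u$i > 0" "\<forall>i. ((t *\<^sub>R mat 1 - B) *v u)$i > 0"
      using tT unfolding T_def by blast
    let ?S = "range (\<lambda>i. ((t *\<^sub>R mat 1 - B) *v u)$i / u$i)"
    define d where "d = Min ?S / 2"
    have fin: "finite ?S" by simp
    have "Min ?S \<in> ?S" using fin by (intro Min_in) auto
    then obtain k where "Min ?S = ((t *\<^sub>R mat 1 - B) *v u)$k / u$k"
      by (metis (no_types, lifting) imageE)
    hence dpos: "d > 0" using u unfolding d_def by simp
    have "(((t - d) *\<^sub>R mat 1 - B) *v u)$i > 0" for i
    proof -
      have "2 * d \<le> ((t *\<^sub>R mat 1 - B) *v u)$i / u$i" unfolding d_def using fin by simp
      hence "2 * d * u$i \<le> ((t *\<^sub>R mat 1 - B) *v u)$i" using u(1) by (simp add: pos_le_divide_eq)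
      moreover have "d * u$i > 0" using dpos u(1) by simp
      ultimately show ?thesis unfolding Mt_apply by (simp add: algebra_simps)
    qed
    thus ?thesis using u(1) dpos unfolding T_def by blast
  qed
  show ?thesis
  proof (rule ccontr)
    assume nex: "\<not> ?thesis"
    hence sT: "s \<notin> T" by (auto simp: T_def)
    define t0 where "t0 = Inf T"
    have gt: "s < t" if tT: "t \<in> T" for t using up[OF that, of s] sT by linarith
    have t0s: "s \<le> t0" unfolding t0_def using Tne gt by (meson cInf_greatest less_imp_le)
    have t0T: "t0 \<notin> T"
    proof
      assume "t0 \<in> T"
      then obtain d where "d > 0" "t0 - d \<in> T" using opn by blast
      hence "t0 \<le> t0 - d" unfolding t0_def using Tbdd by (simp add: cInf_lower)
      thus False using \<open>d > 0\<close> by simp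
    qed
    have allT: "t \<in> T" if tgt: "t > t0" for t
    proof -
      obtain t' where "t' \<in> T" "t' < t" using cInf_less_iff[OF Tne Tbdd] tgt t0_def by auto
      thus ?thesis using up by auto
    qed
    let ?M0 = "t0 *\<^sub>R mat 1 - B"
    have inj0: "\<forall>v. ?M0 *v v = 0 \<longrightarrow> v = 0"
    proof (intro allI impI)
      fix v assume v: "?M0 *v v = 0"
      show "v = 0"
      proof (rule ccontr)
        assume "v \<noteq> 0"
        moreover have "B *v v = t0 *\<^sub>R v"
          using v by (auto simp: vec_eq_iff Mt_apply)
        ultimately have "\<bar>t0\<bar> \<le> spectral_radius B" by (rule real_eig_le_sr)
        hence "t0 = s" using sr t0s by linarith
        hence "(s *\<^sub>R mat 1 - B) *v v = 0" using v by simp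
        thus False using inv_ker[OF inv] \<open>v \<noteq> 0\<close> by blast
      qed
    qed
    obtain N where N: "\<forall>y. ?M0 *v (N *v y) = y" using ker_right_inv[OF inj0] by blast
    obtain C where C: "C > 0" "\<forall>y. norm (N *v y) \<le> norm y * C"
      using bounded_linear.pos_bounded[OF matrix_vector_mul_bounded_linear[of N]] by blast
    define one :: "real^'n" where "one = (\<chi> i. 1)"
    define z where "z = N *v one"
    have Mz: "?M0 *v z = one" using N z_def by simp
    have zbound: "z$i \<ge> - d * (2 * C * norm z)" if d: "d > 0" "d * C \<le> 1/2" for d i
    proof -
      let ?Mt = "(t0 + d) *\<^sub>R mat 1 - B"
      obtain u where u: "\<forall>i. u$i > 0" "\<forall>i. (?Mt *v u)$i > 0"
        using allT[of "t0 + d"] d unfolding T_def by auto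
      have injt: "\<forall>v. ?Mt *v v = 0 \<longrightarrow> v = 0"
      proof (intro allI impI)
        fix v assume v: "?Mt *v v = 0"
        have v1: "v$j \<ge> 0" for j using Z_monotone[OF Zt u] v by simp
        have "?Mt *v (-v) = 0" using v matrix_vector_mult_diff_distrib[of ?Mt 0 v] by simp
        hence v2: "(-v)$j \<ge> 0" for j using Z_monotone[OF Zt u, of "-v"] by simp
        have "v$j = 0" for j using v1[of j] v2[of j] by simp
        thus "v = 0" by (simp add: vec_eq_iff)
      qed
      obtain Nt where Nt: "\<forall>y. ?Mt *v (Nt *v y) = y" using ker_right_inv[OF injt] by blast
      define zt where "zt = Nt *v one"
      have Mzt: "?Mt *v zt = one" using Nt zt_def by simp
      have zt0: "zt$j \<ge> 0" for j using Z_monotone[OF Zt u, of zt] Mzt by (simp add: one_def)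
      have "?M0 *v (zt + d *\<^sub>R (N *v zt)) = one"
      proof -
        have "(?M0 *v (zt + d *\<^sub>R (N *v zt)))$j = one$j" for j
        proof -
          have "(?M0 *v (zt + d *\<^sub>R (N *v zt))) = ?M0 *v zt + d *\<^sub>R zt"
            using N by (simp add: matrix_vector_right_distrib matrix_scaleR_vector_ac flip: scaleR_matrix_vector_assoc)
          hence "(?M0 *v (zt + d *\<^sub>R (N *v zt)))$j = t0 * zt$j - (B *v zt)$j + d * zt$j"
            by (simp add: Mt_apply)
          also have "\<dots> = (?Mt *v zt)$j" by (simp only: Mt_apply) (simp add: algebra_simps)
          finally show ?thesis using Mzt by simp
        qed
        thus ?thesis by (simp add: vec_eq_iff)
      qed
      hence "?M0 *v ((zt + d *\<^sub>R (N *v zt)) - z) = 0" using Mz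
        by (simp add: matrix_vector_mult_diff_distrib)
      hence "(zt + d *\<^sub>R (N *v zt)) - z = 0" using inj0 by blast
      hence zeq: "z = zt + d *\<^sub>R (N *v zt)" by (metis eq_iff_diff_eq_0)
      have nN: "norm (N *v zt) \<le> C * norm zt" using C(2) by (simp add: mult.commute)
      have e: "zt = z - d *\<^sub>R (N *v zt)" using zeq by simp
      have "norm zt = norm (z - d *\<^sub>R (N *v zt))" using e by (rule arg_cong)
      also have "\<dots> \<le> norm z + norm (d *\<^sub>R (N *v zt))" by (rule norm_triangle_ineq4)
      also have "norm (d *\<^sub>R (N *v zt)) = d * norm (N *v zt)" using d(1) by simp
      finally have "norm zt \<le> norm z + d * norm (N *v zt)" .
      moreover have "d * norm (N *v zt) \<le> d * (C * norm zt)" using nN d(1) by (simp add: mult_left_mono)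
      moreover have "d * (C * norm zt) \<le> (1/2) * norm zt"
        using mult_right_mono[OF d(2), of "norm zt"] by (simp add: mult.assoc)
      ultimately have nzt: "norm zt \<le> 2 * norm z" by linarith
      have "\<bar>(N *v zt)$i\<bar> \<le> C * norm zt" using component_le_norm_cart[of "N *v zt" i] nN by linarith
      also have "\<dots> \<le> C * (2 * norm z)" using nzt C(1) by simp
      finally have "(N *v zt)$i \<ge> - (C * (2 * norm z))" by linarith
      hence "d * (N *v zt)$i \<ge> d * (- (C * (2 * norm z)))"
        using mult_left_mono[of "- (C * (2 * norm z))" "(N *v zt)$i" d] d(1) by simp
      hence "d * (N *v zt)$i \<ge> - d * (2 * C * norm z)" by (simp add: algebra_simps)
      thus ?thesis using zeq zt0[of i] by simp
    qed
    have z0: "z$i \<ge> 0" for i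
    proof (rule ccontr)
      assume neg: "\<not> z$i \<ge> 0"
      define K where "K = 2 * C * norm z + 1"
      have "2 * C * norm z \<ge> 0" using C(1) by simp
      hence Kpos: "K > 0" unfolding K_def by linarith
      define d where "d = min (1 / (2 * C)) (- z$i / (2 * K))"
      have "- z$i / (2 * K) > 0" using Kpos neg by (intro divide_pos_pos) auto
      hence dpos: "d > 0" using C(1) by (simp add: d_def)
      have "d * C \<le> 1/2"
      proof -
        have "d \<le> 1 / (2 * C)" by (simp add: d_def)
        hence "d * (2 * C) \<le> 1" using C(1) by (simp add: pos_le_divide_eq)
        thus ?thesis by linarith
      qed
      hence "z$i \<ge> - d * (2 * C * norm z)" using zbound dpos by blast
      moreover have "d * (2 * C * norm z) \<le> d * K" using dpos by (simp add: K_def)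
      moreover have "d * K \<le> - z$i / 2"
      proof -
        have "d \<le> - z$i / (2 * K)" by (simp add: d_def)
        hence "d * (2 * K) \<le> - z$i" using Kpos by (metis pos_le_divide_eq zero_less_mult_iff zero_less_numeral)
        thus ?thesis by linarith
      qed
      ultimately show False using neg by linarith
    qed
    have zpos: "z$i > 0" for i
    proof (rule ccontr)
      assume "\<not> z$i > 0"
      hence "z$i = 0" using z0[of i] by simp
      hence "(?M0 *v z)$i \<le> 0" using Z_row_nonpos[OF Zt] z0 by blast
      thus False using Mz by (simp add: one_def)
    qed
    have "\<forall>i. (?M0 *v z)$i > 0" using Mz by (simp add: one_def)
    hence "t0 \<in> T" unfolding T_def using zpos by blast
    thus False using t0T by simp
  qed
qed

lemma split_one: "(e::real) > 0 \<Longrightarrow> e powr p * e powr (1 - p) = e"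
  by (simp add: powr_add[symmetric])

lemma mult_axis: "((A::real^'n^'n) *v axis i 1)$j = A$j$i"
  by (simp add: matrix_vector_mult_def axis_def if_distrib cong: if_cong)

lemma comparison:
  fixes A :: "real^'n^'n"
  assumes Z: "\<forall>i j. i \<noteq> j \<longrightarrow> A$i$j \<le> 0" and p: "p < 1"
    and x: "\<forall>i. x$i > 0" "\<forall>i. (A *v x)$i \<le> x$i powr p"
    and y: "\<forall>i. y$i > 0" "\<forall>i. (A *v y)$i \<ge> y$i powr p"
  shows "x$i \<le> y$i"
proof (rule ccontr)
  assume neg: "\<not> x$i \<le> y$i"
  let ?S = "range (\<lambda>j. x$j / y$j)"
  define t where "t = Max ?S"
  have fin: "finite ?S" by simp
  have ge: "x$j / y$j \<le> t" for j unfolding t_def using fin by simp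
  have "Max ?S \<in> ?S" using fin by (intro Max_in) auto
  then obtain k where k: "t = x$k / y$k" unfolding t_def by (metis (no_types, lifting) imageE)
  have "x$i / y$i > 1" using y(1)[rule_format, of i] neg by (simp add: less_divide_eq)
  hence t1: "t > 1" using ge[of i] by linarith
  have xk: "x$k = t * y$k" using k y(1)[rule_format, of k] by simp
  define w where "w = t *\<^sub>R y - x"
  have w0: "w$j \<ge> 0" for j
  proof -
    have "x$j \<le> t * y$j" using ge[of j] y(1)[rule_format, of j] by (simp add: pos_divide_le_eq)
    thus ?thesis by (simp add: w_def)
  qed
  have wk: "w$k = 0" using xk by (simp add: w_def)
  have "(A *v w)$k \<le> 0" using Z_row_nonpos[OF Z] w0 wk by blast
  moreover have "(A *v w)$k = t * (A *v y)$k - (A *v x)$k"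
    by (simp add: w_def matrix_vector_mult_diff_distrib matrix_scaleR_vector_ac flip: scaleR_matrix_vector_assoc)
  moreover have "t * y$k powr p \<le> t * (A *v y)$k" using y(2) t1 by simp
  moreover have "x$k powr p = t powr p * y$k powr p"
    using xk t1 y(1) by (simp add: powr_mult)
  moreover have "(A *v x)$k \<le> x$k powr p" using x(2) by simp
  moreover have "t powr p < t" using powr_less_mono[OF p t1] t1 by simp
  moreover have "y$k powr p > 0" using y(1)[rule_format, of k] by simp
  moreover have "(t - t powr p) * y$k powr p > 0"
    using \<open>t powr p < t\<close> \<open>y$k powr p > 0\<close> by simp
  moreover have "(t - t powr p) * y$k powr p = t * y$k powr p - t powr p * y$k powr p"
    by (simp add: algebra_simps)
  ultimately show False by linarith
qed

lemma existence:
  fixes A :: "real^'n^'n"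
  assumes Z: "\<forall>i j. i \<noteq> j \<longrightarrow> A$i$j \<le> 0" and p: "p < 1"
    and u: "\<forall>i. u$i > 0" "\<forall>i. (A *v u)$i > 0"
  shows "\<exists>x. (\<forall>i. x$i > 0) \<and> A *v x = (\<chi> i. x$i powr p)"
proof -
  define r where "r = (\<lambda>i. u$i powr p / (A *v u)$i)"
  have rpos: "r i > 0" for i unfolding r_def
    using u(1)[rule_format, of i] u(2)[rule_format, of i] by (intro divide_pos_pos) auto
  define m where "m = Min (range r)"
  define M where "M = Max (range r)"
  have fin: "finite (range r)" by simp
  have mle: "m \<le> r i" for i unfolding m_def using fin by simp
  have Mge: "r i \<le> M" for i unfolding M_def using fin by simp
  have "m \<in> range r" unfolding m_def using fin by (intro Min_in) auto
  hence mpos: "m > 0" using rpos by auto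
  have Mpos: "M > 0" using Mge[of undefined] rpos[of undefined] by linarith
  define q where "q = 1 - p"
  have qpos: "q > 0" using p by (simp add: q_def)
  define \<epsilon> where "\<epsilon> = m powr (1/q)"
  have epos: "\<epsilon> > 0" using mpos by (simp add: \<epsilon>_def)
  have eq: "\<epsilon> powr q = m" using mpos qpos by (simp add: \<epsilon>_def powr_powr)
  define K where "K = max \<epsilon> ((2 * M) powr (1/q))"
  have eK: "\<epsilon> \<le> K" by (simp add: K_def)
  have Kpos: "K > 0" using epos eK by linarith
  have "(2 * M) powr (1/q) \<le> K" by (simp add: K_def)
  hence "((2 * M) powr (1/q)) powr q \<le> K powr q" using qpos by (intro powr_mono2) auto
  hence Kq: "2 * M \<le> K powr q" using Mpos qpos by (simp add: powr_powr)
  have sub: "\<epsilon> * (A *v u)$i \<le> (\<epsilon> * u$i) powr p" for i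
  proof -
    have Au: "(A *v u)$i > 0" using u by simp
    have "\<epsilon> * (A *v u)$i = \<epsilon> powr p * m * (A *v u)$i"
      using split_one[OF epos, of p] eq by (simp add: q_def)
    also have "\<dots> \<le> \<epsilon> powr p * r i * (A *v u)$i"
      using mle[of i] Au by (intro mult_right_mono mult_left_mono) auto
    also have "\<dots> = \<epsilon> powr p * u$i powr p" using Au by (simp add: r_def)
    also have "\<dots> = (\<epsilon> * u$i) powr p" using epos u(1) by (simp add: powr_mult)
    finally show ?thesis .
  qed
  have sup: "K * (A *v u)$i > (K * u$i) powr p" for i
  proof -
    have Au: "(A *v u)$i > 0" using u by simp
    have "(K * u$i) powr p = K powr p * r i * (A *v u)$i"
      using Au Kpos u(1) by (simp add: r_def powr_mult)
    also have "\<dots> \<le> K powr p * M * (A *v u)$i"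
      using Mge[of i] Au by (intro mult_right_mono mult_left_mono) auto
    also have "\<dots> < K powr p * K powr q * (A *v u)$i"
      using Kq Mpos Au Kpos by (intro mult_strict_right_mono mult_strict_left_mono) auto
    also have "\<dots> = K * (A *v u)$i" using split_one[OF Kpos, of p] by (simp add: q_def)
    finally show ?thesis .
  qed
  define S where "S = {x. (\<forall>i. \<epsilon> * u$i \<le> x$i \<and> x$i \<le> K * u$i) \<and> (\<forall>i. (A *v x)$i \<le> x$i powr p)}"
  have eu: "\<epsilon> *\<^sub>R u \<in> S"
  proof -
    have "\<epsilon> * u$i \<le> K * u$i" for i using eK u(1) by (simp add: mult_right_mono less_imp_le)
    moreover have "(A *v (\<epsilon> *\<^sub>R u))$i \<le> (\<epsilon> *\<^sub>R u)$i powr p" for i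
      using sub[of i] by (simp add: matrix_scaleR_vector_ac flip: scaleR_matrix_vector_assoc)
    ultimately show ?thesis unfolding S_def by simp
  qed
  define xs where "xs = (\<chi> i. Sup ((\<lambda>x. x$i) ` S))"
  have ne: "(\<lambda>x. x$i) ` S \<noteq> {}" for i using eu by blast
  have bdd: "bdd_above ((\<lambda>x. x$i) ` S)" for i
    unfolding bdd_above_def S_def by auto
  have le_xs: "x$i \<le> xs$i" if "x \<in> S" for x i
    unfolding xs_def using cSup_upper[OF _ bdd] that by simp
  have xs_le: "xs$i \<le> K * u$i" for i
  proof -
    have "Sup ((\<lambda>x. x$i) ` S) \<le> K * u$i" by (rule cSup_least[OF ne]) (auto simp: S_def)
    thus ?thesis by (simp add: xs_def)
  qed
  have xs_ge: "\<epsilon> * u$i \<le> xs$i" for i using le_xs[OF eu, of i] by simp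
  have xs_pos: "xs$i > 0" for i using xs_ge[of i] epos u(1)[rule_format, of i]
    by (smt (verit) mult_pos_pos)
  have sub1: "(A *v xs)$i \<le> xs$i powr p" for i
  proof (rule ccontr)
    assume "\<not> ?thesis"
    hence L: "(A *v xs)$i > xs$i powr p" by simp
    define g where "g = (\<lambda>\<tau>. A$i$i * (xs$i - \<tau>) + \<tau> powr p)"
    have "isCont g (xs$i)" unfolding g_def using xs_pos[of i] by (intro continuous_intros) auto
    hence "(g \<longlongrightarrow> g (xs$i)) (at (xs$i))" by (simp add: isCont_def)
    moreover have "g (xs$i) < (A *v xs)$i" using L by (simp add: g_def)
    ultimately have "eventually (\<lambda>\<tau>. g \<tau> < (A *v xs)$i) (at (xs$i))" by (rule order_tendstoD)
    then obtain d where d: "d > 0" "\<forall>\<tau>. \<tau> \<noteq> xs$i \<and> dist \<tau> (xs$i) < d \<longrightarrow> g \<tau> < (A *v xs)$i"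
      unfolding eventually_at by auto
    have "xs$i - d < Sup ((\<lambda>x. x$i) ` S)" using d(1) by (simp add: xs_def)
    then obtain x where x: "x \<in> S" "xs$i - d < x$i" using less_cSup_iff[OF ne bdd] by auto
    have xle: "x$i \<le> xs$i" using le_xs[OF x(1)] .
    have gx: "g (x$i) < (A *v xs)$i"
    proof (cases "x$i = xs$i")
      case True thus ?thesis using \<open>g (xs$i) < (A *v xs)$i\<close> by simp
    next
      case False thus ?thesis using d(2) x(2) xle by (auto simp: dist_real_def)
    qed
    have "(A *v (xs - x))$i \<le> A$i$i * (xs - x)$i"
      using Z_row_le[OF Z, of i "xs - x"] le_xs[OF x(1)] by simp
    hence "(A *v xs)$i \<le> (A *v x)$i + A$i$i * (xs$i - x$i)"
      by (simp add: matrix_vector_mult_diff_distrib)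
    also have "\<dots> \<le> x$i powr p + A$i$i * (xs$i - x$i)" using x(1) by (simp add: S_def)
    also have "\<dots> = g (x$i)" by (simp add: g_def)
    finally show False using gx by simp
  qed
  have sup1: "(A *v xs)$i \<ge> xs$i powr p" for i
  proof (rule ccontr)
    assume "\<not> ?thesis"
    hence L: "(A *v xs)$i < xs$i powr p" by simp
    have lessK: "xs$i < K * u$i"
    proof (rule ccontr)
      assume "\<not> ?thesis"
      hence xi: "xs$i = K * u$i" using xs_le[of i] by simp
      define w where "w = K *\<^sub>R u - xs"
      have "w$j \<ge> 0" for j using xs_le[of j] by (simp add: w_def)
      moreover have "w$i = 0" using xi by (simp add: w_def)
      ultimately have "(A *v w)$i \<le> 0" using Z_row_nonpos[OF Z] by blast
      moreover have "(A *v w)$i = K * (A *v u)$i - (A *v xs)$i"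
        by (simp add: w_def matrix_vector_mult_diff_distrib matrix_scaleR_vector_ac flip: scaleR_matrix_vector_assoc)
      ultimately show False using L sup[of i] xi by simp
    qed
    define h where "h = (\<lambda>\<delta>. (A *v xs)$i + A$i$i * \<delta> - (xs$i + \<delta>) powr p)"
    have "isCont h 0" unfolding h_def using xs_pos[of i] by (intro continuous_intros) auto
    hence "(h \<longlongrightarrow> h 0) (at 0)" by (simp add: isCont_def)
    moreover have "h 0 < 0" using L by (simp add: h_def)
    ultimately have "eventually (\<lambda>\<delta>. h \<delta> < 0) (at 0)" by (rule order_tendstoD)
    then obtain d where d: "d > 0" "\<forall>\<delta>. \<delta> \<noteq> 0 \<and> dist \<delta> 0 < d \<longrightarrow> h \<delta> < 0"
      unfolding eventually_at by auto
    define \<delta> where "\<delta> = min (d/2) (K * u$i - xs$i)"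
    have dpos: "\<delta> > 0" using d(1) lessK by (simp add: \<delta>_def)
    have "\<delta> \<le> d/2" unfolding \<delta>_def by (rule min.cobounded1)
    hence hd: "h \<delta> < 0" using d dpos by (simp add: dist_real_def)
    define y where "y = xs + \<delta> *\<^sub>R axis i 1"
    have yj: "y$j = xs$j + (if j = i then \<delta> else 0)" for j by (simp add: y_def axis_def)
    have Ay: "(A *v y)$j = (A *v xs)$j + \<delta> * A$j$i" for j
      by (simp add: y_def matrix_vector_right_distrib matrix_scaleR_vector_ac mult_axis
          flip: scaleR_matrix_vector_assoc)
    have "y \<in> S"
      unfolding S_def
    proof (intro CollectI conjI allI)
      fix j
      show "\<epsilon> * u$j \<le> y$j" using xs_ge[of j] dpos by (cases "j = i") (simp_all add: yj)
      have "\<delta> \<le> K * u$i - xs$i" unfolding \<delta>_def by (rule min.cobounded2)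
      thus "y$j \<le> K * u$j" using xs_le[of j] by (cases "j = i") (simp_all add: yj)
      show "(A *v y)$j \<le> y$j powr p"
      proof (cases "j = i")
        case True
        thus ?thesis using hd by (simp add: Ay yj h_def mult.commute)
      next
        case False
        have "\<delta> * A$j$i \<le> 0" using Z False dpos by (simp add: mult_nonneg_nonpos)
        thus ?thesis using sub1[of j] False by (simp add: Ay yj)
      qed
    qed
    hence "y$i \<le> xs$i" by (rule le_xs)
    thus False using dpos by (simp add: yj)
  qed
  have "A *v xs = (\<chi> i. xs$i powr p)"
    using sub1 sup1 by (simp add: vec_eq_iff antisym)
  thus ?thesis using xs_pos by blast
qed

theorem proposition3p5:
  fixes A :: "real^'n^'n" and p :: real
  assumes "nonsingular_M_matrix A" and "p < 1"
  shows "(\<forall>x y :: real^'n.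
            (\<forall>i. x $ i > 0) \<and> (\<forall>i. (A *v x) $ i \<le> x $ i powr p) \<and>
            (\<forall>i. y $ i > 0) \<and> (\<forall>i. (A *v y) $ i \<ge> y $ i powr p)
            \<longrightarrow> (\<forall>i. x $ i \<le> y $ i))
       \<and> (\<exists>!x :: real^'n. (\<forall>i. x $ i > 0) \<and> A *v x = (\<chi> i. x $ i powr p))"
proof -
  have MA: "M_matrix A" and inv: "invertible A"
    using assms(1) unfolding nonsingular_M_matrix_def by auto
  have Z: "\<forall>i j. i \<noteq> j \<longrightarrow> A$i$j \<le> 0" using MA unfolding M_matrix_def Z_matrix_def by blast
  obtain s B where B0: "\<forall>i j. B$i$j \<ge> 0" and AB: "A = s *\<^sub>R mat 1 - B" and sr: "s \<ge> spectral_radius B"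
    using MA unfolding M_matrix_def by blast
  have "invertible (s *\<^sub>R mat 1 - B)" using inv unfolding AB .
  from Mmat_pos_vec[OF B0 sr this] obtain u
    where u1: "\<forall>i. u$i > 0" and u2: "\<forall>i. ((s *\<^sub>R mat 1 - B) *v u)$i > 0" by blast
  have u2': "\<forall>i. (A *v u)$i > 0" unfolding AB by (rule u2)
  have cmp: "\<forall>x y :: real^'n.
            (\<forall>i. x $ i > 0) \<and> (\<forall>i. (A *v x) $ i \<le> x $ i powr p) \<and>
            (\<forall>i. y $ i > 0) \<and> (\<forall>i. (A *v y) $ i \<ge> y $ i powr p)
            \<longrightarrow> (\<forall>i. x $ i \<le> y $ i)"
  proof (intro allI impI)
    fix x y :: "real^'n" and i
    assume h: "(\<forall>i. x $ i > 0) \<and> (\<forall>i. (A *v x) $ i \<le> x $ i powr p) \<and>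
            (\<forall>i. y $ i > 0) \<and> (\<forall>i. (A *v y) $ i \<ge> y $ i powr p)"
    show "x$i \<le> y$i"
      using comparison[OF Z assms(2), of x y i] h by blast
  qed
  obtain x where x: "\<forall>i. x$i > 0" "A *v x = (\<chi> i. x$i powr p)"
    using existence[OF Z assms(2) u1 u2'] by blast
  have solle: "\<forall>i. (A *v v)$i \<le> v$i powr p" if "A *v v = (\<chi> i. v$i powr p)" for v
    using that by simp
  have solge: "\<forall>i. (A *v v)$i \<ge> v$i powr p" if "A *v v = (\<chi> i. v$i powr p)" for v
    using that by simp
  have uniq: "y = x" if y: "\<forall>i. y$i > 0" "A *v y = (\<chi> i. y$i powr p)" for y
  proof -
    have "y$i = x$i" for i
    proof (rule antisym)
      show "y$i \<le> x$i"
        by (rule comparison[OF Z assms(2) y(1) solle[OF y(2)] x(1) solge[OF x(2)]])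
      show "x$i \<le> y$i"
        by (rule comparison[OF Z assms(2) x(1) solle[OF x(2)] y(1) solge[OF y(2)]])
    qed
    thus ?thesis by (simp add: vec_eq_iff)
  qed
  show ?thesis
  proof (intro conjI)
    show "\<forall>x y :: real^'n.
            (\<forall>i. x $ i > 0) \<and> (\<forall>i. (A *v x) $ i \<le> x $ i powr p) \<and>
            (\<forall>i. y $ i > 0) \<and> (\<forall>i. (A *v y) $ i \<ge> y $ i powr p)
            \<longrightarrow> (\<forall>i. x $ i \<le> y $ i)" by (rule cmp)
    show "\<exists>!x :: real^'n. (\<forall>i. x $ i > 0) \<and> A *v x = (\<chi> i. x $ i powr p)"
    proof (rule ex1I[of _ x])
      show "(\<forall>i. x $ i > 0) \<and> A *v x = (\<chi> i. x $ i powr p)" using x by blast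
      fix y assume "(\<forall>i. y $ i > 0) \<and> A *v y = (\<chi> i. y $ i powr p)"
      thus "y = x" using uniq by blast
    qed
  qed
qed

end
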